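(* Let $\mathsf{C}\subset V$ be a proper cone, $\phi$ in the interior of $\mathsf{C}^*$, $K_\phi=\mathsf{C}\cap\phi^{-1}(1)$ a polytope, and $k\ge1$. If $\mathrm{card}(\mathrm{Av}(x))>k$ for every vertex $x$ of $K_\phi$, then $\gamma_k^\phi$ is not entanglement-breaking.
   Context: Proper cone: closed convex cone in a finite-dimensional real vector space, containing no line, not contained in a hyperplane; $\mathsf{C}^*$ is its dual cone; $\mathsf{C}_1\otimes_{\min}\mathsf{C}_2=\mathrm{conv}\{x\otimes y:x\in\mathsf{C}_1,y\in\mathsf{C}_2\}$. $\gamma_k^\phi=\frac1k\sum_{j=1}^k\phi^{\otimes(j-1)}\otimes\mathrm{Id}_V\otimes\phi^{\otimes(k-j)}:V^{\otimes k}\to V$, viewed as a tensor in $(V^* )^{\otimes k}\otimes V$, is entanglement-breaking if it belongs to $(\mathsf{C}^* )^{\otimes_{\min}k}\otimes_{\min}\mathsf{C}$. The avoiding set of a vertex $x$ of $K_\phi$ is the set of facets of $K_\phi$ not containing $x$. *)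

theory Defs
  imports "HOL-Analysis.Analysis" "HOL-Library.Function_Algebras"
begin

text \<open>Real-valued functions form a real vector space pointwise; needed so that the
  library's convex hull can be used for sets of tensors.\<close>

instantiation "fun" :: (type, real_vector) real_vector
begin
definition scaleR_fun :: "real \<Rightarrow> ('a \<Rightarrow> 'b) \<Rightarrow> 'a \<Rightarrow> 'b"
  where "scaleR_fun r f = (\<lambda>x. r *\<^sub>R f x)"
instance
  by standard (auto simp: scaleR_fun_def fun_eq_iff scaleR_add_right scaleR_add_left)
end

text \<open>Finite-dimensional real vector space V = type 'v (euclidean_space).
  The dual space V* is identified with V via the inner product.\<close>

definition proper_cone :: "'v::euclidean_space set \<Rightarrow> bool" where
  "proper_cone C \<longleftrightarrow> closed C \<and> convex C \<and> cone C
     \<and> \<not> (\<exists>u. u \<noteq> 0 \<and> range (\<lambda>t::real. t *\<^sub>R u) \<subseteq> C)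
     \<and> \<not> (\<exists>a b. a \<noteq> 0 \<and> C \<subseteq> {x. a \<bullet> x = b})"

definition dual_cone :: "'v::euclidean_space set \<Rightarrow> 'v set" where
  "dual_cone C = {f. \<forall>x\<in>C. 0 \<le> f \<bullet> x}"

text \<open>Tensors of order m over V are represented as multilinear forms on V^m,
  i.e. functions on lists of vectors (vanishing on lists of length \<noteq> m).\<close>

type_synonym 'v tensor = "'v list \<Rightarrow> real"

definition vec_tensor :: "'v::euclidean_space \<Rightarrow> 'v tensor" where
  "vec_tensor x = (\<lambda>vs. if length vs = 1 then x \<bullet> hd vs else 0)"

definition tensor_prod :: "nat \<Rightarrow> nat \<Rightarrow> 'v tensor \<Rightarrow> 'v tensor \<Rightarrow> 'v tensor" where
  "tensor_prod a b T S = (\<lambda>vs. if length vs = a + b then T (take a vs) * S (drop a vs) else 0)"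

definition min_tensor :: "nat \<Rightarrow> nat \<Rightarrow> 'v tensor set \<Rightarrow> 'v tensor set \<Rightarrow> 'v tensor set" where
  "min_tensor a b A B = convex hull {tensor_prod a b T S | T S. T \<in> A \<and> S \<in> B}"

fun min_tensor_power :: "'v::euclidean_space set \<Rightarrow> nat \<Rightarrow> 'v tensor set" where
  "min_tensor_power C 0 = {}"
| "min_tensor_power C (Suc 0) = vec_tensor ` C"
| "min_tensor_power C (Suc (Suc n)) =
     min_tensor (Suc n) 1 (min_tensor_power C (Suc n)) (vec_tensor ` C)"

text \<open>gamma_k^phi as a tensor in (V*)^{\<otimes>k} \<otimes> V, evaluated as a multilinear form
  on (v_1,...,v_k, w): (1/k) \<Sum>_j (\<Prod>_{i\<noteq>j} phi(v_i)) \<langle>v_j, w\<rangle>.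
  Here Id_V \<in> V* \<otimes> V corresponds to the form (v,w) \<mapsto> v \<bullet> w.\<close>
definition gamma :: "nat \<Rightarrow> 'v::euclidean_space \<Rightarrow> 'v tensor" where
  "gamma k \<phi> = (\<lambda>vs. if length vs = k + 1 then
      (1 / real k) * (\<Sum>j<k. (\<Prod>i\<in>{..<k} - {j}. \<phi> \<bullet> vs ! i) * ((vs ! j) \<bullet> (vs ! k)))
    else 0)"

definition entanglement_breaking :: "'v::euclidean_space set \<Rightarrow> nat \<Rightarrow> 'v tensor \<Rightarrow> bool" where
  "entanglement_breaking C k T \<longleftrightarrow>
     T \<in> min_tensor k 1 (min_tensor_power (dual_cone C) k) (vec_tensor ` C)"

definition base_section :: "'v::euclidean_space set \<Rightarrow> 'v \<Rightarrow> 'v set" where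
  "base_section C \<phi> = C \<inter> {x. \<phi> \<bullet> x = 1}"

definition avoiding_set :: "'v::euclidean_space set \<Rightarrow> 'v \<Rightarrow> 'v set set" where
  "avoiding_set K x = {F. F facet_of K \<and> x \<notin> F}"

end

theory Submission imports Defs begin

lemma sum_split_add: "(\<Sum>i<n1+n2. g i) = (\<Sum>i<n1. g i) + (\<Sum>i<n2. g (n1 + i :: nat)) "
  by (induction n2) (auto simp: add.assoc)

definition rep :: "nat \<Rightarrow> (nat \<Rightarrow> 'v::euclidean_space set) \<Rightarrow> 'v tensor set" where
  "rep m S = {T. \<exists>(n::nat) (c::nat\<Rightarrow>real) (f::nat\<Rightarrow>nat\<Rightarrow>'v). (\<forall>i<n. 0 \<le> c i \<and> (\<forall>j<m. f i j \<in> S j)) \<and>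
      T = (\<lambda>vs. if length vs = m then (\<Sum>i<n. c i * (\<Prod>j<m. f i j \<bullet> vs!j)) else 0)}"

lemma rep_convex: "convex (rep m S)"
  unfolding convex_def
proof (intro ballI allI impI)
  fix x y and u v :: real
  assume x: "x \<in> rep m S" and y: "y \<in> rep m S" and uv: "0 \<le> u" "0 \<le> v" "u + v = 1"
  obtain n1 :: nat and c1 f1 where 1: "\<forall>i<n1. 0 \<le> c1 i \<and> (\<forall>j<m. f1 i j \<in> S j)"
    "x = (\<lambda>vs. if length vs = m then (\<Sum>i<n1. c1 i * (\<Prod>j<m. f1 i j \<bullet> vs!j)) else 0)"
    using x unfolding rep_def by blast
  obtain n2 :: nat and c2 f2 where 2: "\<forall>i<n2. 0 \<le> c2 i \<and> (\<forall>j<m. f2 i j \<in> S j)"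
    "y = (\<lambda>vs. if length vs = m then (\<Sum>i<n2. c2 i * (\<Prod>j<m. f2 i j \<bullet> vs!j)) else 0)"
    using y unfolding rep_def by blast
  define c where "c i = (if i < n1 then u * c1 i else v * c2 (i - n1))" for i
  define f where "f i = (if i < n1 then f1 i else f2 (i - n1))" for i
  have "\<forall>i<n1+n2. 0 \<le> c i \<and> (\<forall>j<m. f i j \<in> S j)"
    using 1(1) 2(1) uv by (auto simp: c_def f_def)
  moreover have "u *\<^sub>R x + v *\<^sub>R y = (\<lambda>vs. if length vs = m then (\<Sum>i<n1+n2. c i * (\<Prod>j<m. f i j \<bullet> vs!j)) else 0)"
  proof
    fix vs :: "'a list"
    have s1: "(\<Sum>i<n1. c i * (\<Prod>j<m. f i j \<bullet> vs!j)) = u * (\<Sum>i<n1. c1 i * (\<Prod>j<m. f1 i j \<bullet> vs!j))"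
      unfolding sum_distrib_left by (rule sum.cong) (simp_all add: c_def f_def)
    have s2: "(\<Sum>i<n2. c (n1 + i) * (\<Prod>j<m. f (n1 + i) j \<bullet> vs!j)) = v * (\<Sum>i<n2. c2 i * (\<Prod>j<m. f2 i j \<bullet> vs!j))"
      unfolding sum_distrib_left by (rule sum.cong) (simp_all add: c_def f_def)
    show "(u *\<^sub>R x + v *\<^sub>R y) vs = (if length vs = m then (\<Sum>i<n1+n2. c i * (\<Prod>j<m. f i j \<bullet> vs!j)) else 0)"
      unfolding sum_split_add s1 s2 by (simp add: 1(2) 2(2) scaleR_fun_def)
  qed
  ultimately show "u *\<^sub>R x + v *\<^sub>R y \<in> rep m S" unfolding rep_def by blast
qed

lemma rep_prod:
  assumes "T \<in> rep a S" "x \<in> S a"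
  shows "tensor_prod a 1 T (vec_tensor x) \<in> rep (Suc a) S"
proof -
  obtain n :: nat and c f where 1: "\<forall>i<n. 0 \<le> c i \<and> (\<forall>j<a. f i j \<in> S j)"
    "T = (\<lambda>vs. if length vs = a then (\<Sum>i<n. c i * (\<Prod>j<a. f i j \<bullet> vs!j)) else 0)"
    using assms(1) unfolding rep_def by blast
  define f' where "f' i j = (if j < a then f i j else x)" for i j
  have "\<forall>i<n. 0 \<le> c i \<and> (\<forall>j<Suc a. f' i j \<in> S j)"
    using 1(1) assms(2) by (auto simp: f'_def less_Suc_eq)
  moreover have "tensor_prod a 1 T (vec_tensor x) = (\<lambda>vs. if length vs = Suc a then (\<Sum>i<n. c i * (\<Prod>j<Suc a. f' i j \<bullet> vs!j)) else 0)"
  proof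
    fix vs :: "'a list"
    show "tensor_prod a 1 T (vec_tensor x) vs = (if length vs = Suc a then (\<Sum>i<n. c i * (\<Prod>j<Suc a. f' i j \<bullet> vs!j)) else 0)"
    proof (cases "length vs = Suc a")
      case True
      have p: "(\<Prod>j<a. f i j \<bullet> take a vs ! j) = (\<Prod>j<a. f' i j \<bullet> vs ! j)" for i
        by (rule prod.cong) (auto simp: f'_def)
      show ?thesis using True
        by (simp add: tensor_prod_def 1(2) vec_tensor_def hd_drop_conv_nth p sum_distrib_right
             mult.assoc f'_def)
    qed (simp add: tensor_prod_def)
  qed
  ultimately show ?thesis unfolding rep_def by blast
qed

lemma rep_mono: "(\<And>j. j < m \<Longrightarrow> S j \<subseteq> S' j) \<Longrightarrow> rep m S \<subseteq> rep m S'"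
  unfolding rep_def by (auto 0 3) (metis subsetD)

lemma power_rep: "m \<ge> 1 \<Longrightarrow> min_tensor_power D m \<subseteq> rep m (\<lambda>_. D)"
proof (induction D m rule: min_tensor_power.induct)
  case (2 C)
  show ?case
  proof
    fix T assume "T \<in> min_tensor_power C (Suc 0)"
    then obtain x where x: "x \<in> C" "T = vec_tensor x" by auto
    have "T = (\<lambda>vs. if length vs = 1 then (\<Sum>i<(1::nat). 1 * (\<Prod>j<(1::nat). (\<lambda>(i::nat) (j::nat). x) i j \<bullet> vs!j)) else 0)"
      by (auto simp: x vec_tensor_def fun_eq_iff length_Suc_conv card_lessThan)
    then show "T \<in> rep (Suc 0) (\<lambda>_. C)" unfolding rep_def using x(1)
      by (intro CollectI exI[of _ 1] exI[of _ "\<lambda>_. 1"] exI[of _ "\<lambda>i j. x"]) auto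
  qed
next
  case (3 C n)
  show ?case
    unfolding min_tensor_power.simps min_tensor_def
    apply (rule hull_minimal)
    using 3 rep_prod[of _ "Suc n" "\<lambda>_. C"] rep_convex by auto
qed auto

lemma eb_rep:
  assumes "entanglement_breaking C k T" "k \<ge> 1"
  shows "T \<in> rep (Suc k) (\<lambda>j. if j < k then dual_cone C else C)"
proof -
  let ?S = "\<lambda>j. if j < k then dual_cone C else C"
  have "min_tensor_power (dual_cone C) k \<subseteq> rep k ?S"
    using power_rep[OF assms(2), of "dual_cone C"] rep_mono[of k "\<lambda>_. dual_cone C" ?S] by auto
  then have "{tensor_prod k 1 T S |T S. T \<in> min_tensor_power (dual_cone C) k \<and> S \<in> vec_tensor ` C}
     \<subseteq> rep (Suc k) ?S"
    using rep_prod[of _ k ?S] by auto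
  then have "min_tensor k 1 (min_tensor_power (dual_cone C) k) (vec_tensor ` C) \<subseteq> rep (Suc k) ?S"
    unfolding min_tensor_def by (rule hull_minimal) (rule rep_convex)
  then show ?thesis using assms(1) unfolding entanglement_breaking_def by auto
qed

lemma gamma_G1:
  assumes "\<phi> \<bullet> y = 1" "k \<ge> 1"
  shows "gamma k \<phi> (replicate k y @ [w]) = y \<bullet> w"
proof -
  have p: "(\<Prod>i\<in>{..<k}-{j}. \<phi> \<bullet> (replicate k y @ [w]) ! i) = 1" for j
    by (rule prod.neutral) (auto simp: nth_append assms)
  show ?thesis using assms by (simp add: gamma_def p nth_append del: replicate.simps)
qed

lemma gamma_G2:
  assumes "\<forall>j<k. U j \<bullet> g = 0"
  shows "gamma k \<phi> (map U [0..<k] @ [g]) = 0"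
  using assms by (auto simp: gamma_def nth_append intro!: sum.neutral)

theorem mainTheorem13:
  fixes C :: "'v::euclidean_space set" and \<phi> :: 'v and k :: nat
  assumes "proper_cone C"
    and "\<phi> \<in> interior (dual_cone C)"
    and "polytope (base_section C \<phi>)"
    and "k \<ge> 1"
    and "\<forall>x. x extreme_point_of (base_section C \<phi>) \<longrightarrow>
           card (avoiding_set (base_section C \<phi>) x) > k"
  shows "\<not> entanglement_breaking C k (gamma k \<phi>)"
proof
  assume EB: "entanglement_breaking C k (gamma k \<phi>)"
  define D where "D = dual_cone C"
  define K where "K = base_section C \<phi>"
  have Dmem: "g \<in> D \<longleftrightarrow> (\<forall>x\<in>C. 0 \<le> g \<bullet> x)" for g by (simp add: D_def dual_cone_def)
  have convC: "convex C" and coneC: "cone C" using assms(1) by (auto simp: proper_cone_def)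
  have Kdef: "x \<in> K \<longleftrightarrow> x \<in> C \<and> \<phi> \<bullet> x = 1" for x by (simp add: K_def base_section_def)
  have KC: "K \<subseteq> C" using Kdef by auto
  have convK: "convex K" unfolding K_def base_section_def
    by (intro convex_Int convC convex_hyperplane)
  have polyK: "polyhedron K" using assms(3) K_def polytope_imp_polyhedron by auto
  have pos: "0 < \<phi> \<bullet> x" if "x \<in> C" "x \<noteq> 0" for x
  proof -
    obtain e where e: "e > 0" "ball \<phi> e \<subseteq> D" using assms(2) mem_interior D_def by metis
    define z where "z = \<phi> - (e / (2 * norm x)) *\<^sub>R x"
    have "dist \<phi> z = e / 2" using that e by (simp add: z_def dist_norm)
    then have "z \<in> D" using e by auto
    then have "0 \<le> z \<bullet> x" using Dmem that by auto
    also have "z \<bullet> x = \<phi> \<bullet> x - e / 2 * norm x"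
      using that by (simp add: z_def inner_diff_left power2_eq_square flip: power2_norm_eq_inner)
    finally have "e / 2 * norm x \<le> \<phi> \<bullet> x" by simp
    moreover have "0 < e / 2 * norm x" using e that by simp
    ultimately show ?thesis by linarith
  qed
  have nrm: "(1 / (\<phi> \<bullet> x)) *\<^sub>R x \<in> K" "x = (\<phi> \<bullet> x) *\<^sub>R ((1 / (\<phi> \<bullet> x)) *\<^sub>R x)"
    if "x \<in> C" "x \<noteq> 0" for x
    using pos[OF that] that coneC by (auto simp: Kdef cone_def)
  have supp: "b *\<^sub>R \<phi> - a \<in> D" if "K \<subseteq> {x. a \<bullet> x \<le> b}" for a b
    unfolding Dmem
  proof
    fix x assume x: "x \<in> C"
    show "0 \<le> (b *\<^sub>R \<phi> - a) \<bullet> x"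
    proof (cases "x = 0")
      case False
      define u where "u = (1 / (\<phi> \<bullet> x)) *\<^sub>R x"
      have u: "u \<in> K" "x = (\<phi> \<bullet> x) *\<^sub>R u" using nrm[OF x False] u_def by auto
      have "(b *\<^sub>R \<phi> - a) \<bullet> x = (\<phi> \<bullet> x) * (b - a \<bullet> u)"
        using u(1) Kdef by (subst u(2)) (simp add: inner_diff_left algebra_simps)
      moreover have "a \<bullet> u \<le> b" using u(1) that by auto
      ultimately show ?thesis using pos[OF x False] by simp
    qed simp
  qed
  have "C \<noteq> {} \<and> C \<noteq> {0}"
  proof -
    obtain e :: 'v where "e \<in> Basis" using nonempty_Basis by blast
    then have e0: "e \<noteq> 0" by auto
    have "\<not> C \<subseteq> {x. e \<bullet> x = 0}" using assms(1) e0 unfolding proper_cone_def by blast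
    then show ?thesis by auto
  qed
  then obtain x1 where x1: "x1 \<in> C" "x1 \<noteq> 0" by blast
  then have Kne: "K \<noteq> {}" using nrm by blast
  have cK: "compact K" using assms(3) polytope_imp_compact K_def by blast
  obtain y where yext: "y extreme_point_of K"
    using extreme_point_exists_convex[OF cK convK Kne] by blast
  have yK: "y \<in> K" using yext extreme_point_of_def by blast
  have yC: "y \<in> C" and y1: "\<phi> \<bullet> y = 1" using yK Kdef by auto
  have "{y} face_of K" using yext face_of_singleton by blast
  then have "{y} exposed_face_of K" using exposed_face_of_polyhedron[OF polyK] by simp
  then obtain a b where ab: "K \<subseteq> {x. a \<bullet> x \<le> b}" "{y} = K \<inter> {x. a \<bullet> x = b}"
    unfolding exposed_face_of_def by blast
  define h where "h = b *\<^sub>R \<phi> - a"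
  have hD: "h \<in> D" using supp[OF ab(1)] h_def by simp
  have hK: "h \<bullet> u = b - a \<bullet> u" if "u \<in> K" for u using that Kdef by (simp add: h_def inner_diff_left)
  have hy: "h \<bullet> y = 0" using hK[OF yK] ab(2) by auto
  let ?S = "\<lambda>j. if j < k then D else C"
  obtain n :: nat and c f where cf: "\<forall>i<n. 0 \<le> c i \<and> (\<forall>j<Suc k. f i j \<in> ?S j)"
    and geq: "gamma k \<phi> = (\<lambda>vs. if length vs = Suc k then (\<Sum>i<n. c i * (\<Prod>j<Suc k. f i j \<bullet> vs!j)) else 0)"
    using eb_rep[OF EB assms(4)] unfolding rep_def D_def by blast
  have fS: "f i j \<in> (if j < k then D else C)" if "i < n" "j < Suc k" for i j using cf that by blast
  have fD: "f i j \<in> D" if "i < n" "j < k" for i j using fS[of i j] that by simp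
  have fC: "f i k \<in> C" if "i < n" for i using fS[of i k] that by simp
  have ev: "gamma k \<phi> vs = (\<Sum>i<n. c i * (\<Prod>j<k. f i j \<bullet> vs!j) * (f i k \<bullet> vs ! k))"
    if "length vs = Suc k" for vs
    using that by (simp add: geq mult.assoc)
  have nnD: "0 \<le> g \<bullet> x" if "g \<in> D" "x \<in> C" for g x using that Dmem by auto
  define P where "P i = c i * (\<Prod>j<k. f i j \<bullet> y)" for i
  have Pnn: "0 \<le> P i" if "i < n" for i
    unfolding P_def using cf that fD nnD yC by (auto intro!: mult_nonneg_nonneg prod_nonneg)
  have E1: "(\<Sum>i<n. P i * (f i k \<bullet> w)) = y \<bullet> w" for w
  proof -
    have "(\<Prod>j<k. f i j \<bullet> (replicate k y @ [w]) ! j) = (\<Prod>j<k. f i j \<bullet> y)" for i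
      by (rule prod.cong) (auto simp: nth_append)
    then show ?thesis using ev[of "replicate k y @ [w]"] gamma_G1[OF y1 assms(4), of w]
      by (simp add: P_def nth_append)
  qed
  have "y \<noteq> 0" using y1 by auto
  then have "(\<Sum>i<n. P i * (f i k \<bullet> y)) \<noteq> 0" using E1[of y] by simp
  then obtain i0 where i0: "i0 < n" "P i0 * (f i0 k \<bullet> y) \<noteq> 0"
    using sum.not_neutral_contains_not_neutral by blast
  have "(\<Sum>i<n. P i * (f i k \<bullet> h)) = 0" using E1[of h] hy by (simp add: inner_commute)
  moreover have "\<forall>i\<in>{..<n}. 0 \<le> P i * (f i k \<bullet> h)"
  proof
    fix i assume i: "i \<in> {..<n}"
    have "0 \<le> f i k \<bullet> h" using nnD[OF hD fC[of i]] i by (simp add: inner_commute)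
    then show "0 \<le> P i * (f i k \<bullet> h)" using Pnn[of i] i by simp
  qed
  ultimately have "\<forall>i\<in>{..<n}. P i * (f i k \<bullet> h) = 0"
    using sum_nonneg_eq_0_iff[of "{..<n}" "\<lambda>i. P i * (f i k \<bullet> h)"] by simp
  then have "P i0 * (f i0 k \<bullet> h) = 0" using i0(1) by simp
  then have x0h: "f i0 k \<bullet> h = 0" using i0 by auto
  define x0 where "x0 = f i0 k"
  have x0C: "x0 \<in> C" using fC i0 x0_def by auto
  have x00: "x0 \<noteq> 0" using i0 x0_def by auto
  define u where "u = (1 / (\<phi> \<bullet> x0)) *\<^sub>R x0"
  have uK: "u \<in> K" and x0u: "x0 = (\<phi> \<bullet> x0) *\<^sub>R u" using nrm[OF x0C x00] u_def by auto
  have "h \<bullet> u = 0" using x0h x0_def u_def by (simp add: inner_commute)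
  then have "u \<in> K \<inter> {x. a \<bullet> x = b}" using hK[OF uK] uK by auto
  then have "u = y" using ab(2) by blast
  then have x0y: "x0 = (\<phi> \<bullet> x0) *\<^sub>R y" using x0u by simp
  have tpos: "0 < \<phi> \<bullet> x0" using pos[OF x0C x00] .
  have "c i0 \<noteq> 0" using i0 by (auto simp: P_def)
  then have ci0: "0 < c i0" using i0 cf by force
  have fy: "f i0 j \<bullet> y \<noteq> 0" if "j < k" for j using i0 that P_def by auto
  have kill: "\<exists>j<k. \<forall>v\<in>F. f i0 j \<bullet> v = 0" if F: "F \<in> avoiding_set K y" for F
  proof (rule ccontr)
    assume "\<not> ?thesis"
    then have "\<forall>j. \<exists>v. j < k \<longrightarrow> v \<in> F \<and> f i0 j \<bullet> v \<noteq> 0" by blast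
    then obtain U where U: "\<And>j. j < k \<Longrightarrow> U j \<in> F \<and> f i0 j \<bullet> U j \<noteq> 0" by metis
    have Ff: "F facet_of K" "y \<notin> F" using F by (auto simp: avoiding_set_def)
    then have "F exposed_face_of K" using exposed_face_of_polyhedron[OF polyK] facet_of_def by blast
    then obtain aF bF where abF: "K \<subseteq> {x. aF \<bullet> x \<le> bF}" "F = K \<inter> {x. aF \<bullet> x = bF}"
      unfolding exposed_face_of_def by blast
    define g where "g = bF *\<^sub>R \<phi> - aF"
    have gD: "g \<in> D" using supp[OF abF(1)] g_def by simp
    have gK: "g \<bullet> v = bF - aF \<bullet> v" if "v \<in> K" for v using that Kdef by (simp add: g_def inner_diff_left)
    have UK: "U j \<in> K" if "j < k" for j using U[OF that] abF(2) by auto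
    have gU: "g \<bullet> U j = 0" if "j < k" for j
    proof -
      have "U j \<in> F" using U that by auto
      then have "U j \<in> K" "aF \<bullet> U j = bF" using abF(2) by auto
      then show ?thesis using gK by simp
    qed
    have Ug: "\<forall>j<k. U j \<bullet> g = 0" using gU by (simp add: inner_commute)
    have gy: "0 < g \<bullet> y" using gK[OF yK] abF Ff(2) yK by auto
    define vs where "vs = map U [0..<k] @ [g]"
    have "(\<Prod>j<k. f i j \<bullet> vs ! j) = (\<Prod>j<k. f i j \<bullet> U j)" for i
      by (rule prod.cong) (auto simp: vs_def nth_append)
    then have "(\<Sum>i<n. c i * (\<Prod>j<k. f i j \<bullet> U j) * (f i k \<bullet> g)) = 0"
      using ev[of vs] gamma_G2[OF Ug, of \<phi>] by (simp add: vs_def nth_append)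
    moreover have "\<forall>i\<in>{..<n}. 0 \<le> c i * (\<Prod>j<k. f i j \<bullet> U j) * (f i k \<bullet> g)"
    proof
      fix i assume i: "i \<in> {..<n}"
      have "0 \<le> c i" using cf i by auto
      moreover have "0 \<le> (\<Prod>j<k. f i j \<bullet> U j)"
      proof (rule prod_nonneg)
        fix j assume "j \<in> {..<k}"
        then show "0 \<le> f i j \<bullet> U j" using nnD[OF fD[of i j]] UK[of j] KC i by auto
      qed
      moreover have "0 \<le> f i k \<bullet> g" using nnD[OF gD fC[of i]] i by (simp add: inner_commute)
      ultimately show "0 \<le> c i * (\<Prod>j<k. f i j \<bullet> U j) * (f i k \<bullet> g)" by simp
    qed
    ultimately have "\<forall>i\<in>{..<n}. c i * (\<Prod>j<k. f i j \<bullet> U j) * (f i k \<bullet> g) = 0"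
      using sum_nonneg_eq_0_iff[of "{..<n}" "\<lambda>i. c i * (\<Prod>j<k. f i j \<bullet> U j) * (f i k \<bullet> g)"] by simp
    then have "c i0 * (\<Prod>j<k. f i0 j \<bullet> U j) * (f i0 k \<bullet> g) = 0" using i0(1) by simp
    moreover have "(\<Prod>j<k. f i0 j \<bullet> U j) \<noteq> 0" using U by auto
    moreover have "f i0 k \<bullet> g = (\<phi> \<bullet> x0) * (g \<bullet> y)"
      using x0y x0_def by (metis inner_commute inner_scaleR_left)
    ultimately show False using ci0 tpos gy by auto
  qed
  then obtain J where J: "\<And>F. F \<in> avoiding_set K y \<Longrightarrow> J F < k \<and> (\<forall>v\<in>F. f i0 (J F) \<bullet> v = 0)"
    by metis
  have cardA: "card (avoiding_set K y) > k" using assms(5) yext K_def by auto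
  then have finA: "finite (avoiding_set K y)" using card.infinite by fastforce
  have "\<not> inj_on J (avoiding_set K y)"
  proof
    assume "inj_on J (avoiding_set K y)"
    then have "card (avoiding_set K y) \<le> card {..<k}"
      by (rule card_inj_on_le) (use J in auto)
    then show False using cardA by simp
  qed
  then obtain F F' where FF: "F \<in> avoiding_set K y" "F' \<in> avoiding_set K y" "F \<noteq> F'" "J F = J F'"
    unfolding inj_on_def by blast
  define j where "j = J F"
  have jk: "j < k" using J FF j_def by auto
  define G where "G = K \<inter> {x. (- f i0 j) \<bullet> x = 0}"
  have fnn: "0 \<le> f i0 j \<bullet> x" if "x \<in> K" for x using nnD[OF fD[OF i0(1) jk]] KC that by auto
  have Gface: "G face_of K" unfolding G_def
    by (rule face_of_Int_supporting_hyperplane_le[OF convK]) (use fnn in auto)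
  have "0 < f i0 j \<bullet> y" using fy[OF jk] fnn[OF yK] by auto
  then have "y \<notin> G" unfolding G_def by auto
  then have GK: "G \<noteq> K" using yK by auto
  have "aff_dim G < aff_dim K" using face_of_aff_dim_lt[OF convK Gface GK] .
  have eqG: "H = G" if "H \<in> avoiding_set K y" "\<forall>v\<in>H. f i0 j \<bullet> v = 0" for H
  proof (rule ccontr)
    assume ne: "H \<noteq> G"
    have Hf: "H facet_of K" using that by (auto simp: avoiding_set_def)
    have HG: "H \<subseteq> G" using that(2) Hf G_def facet_of_imp_subset by auto
    have "H face_of G" using face_of_subset[OF _ HG] Hf facet_of_def Gface face_of_imp_subset by blast
    then have "aff_dim H < aff_dim G"
      using face_of_aff_dim_lt[OF face_of_imp_convex[OF Gface]] ne by blast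
    then show False using Hf \<open>aff_dim G < aff_dim K\<close> by (simp add: facet_of_def)
  qed
  have "F = G" using eqG[OF FF(1)] J[OF FF(1)] j_def by auto
  moreover have "F' = G" using eqG[OF FF(2)] J[OF FF(2)] j_def FF(4) by auto
  ultimately show False using FF(3) by simp
qed

end
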